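(* Let $D=\mathrm{diag}(d_1,\dots,d_n)$ be a complex diagonal matrix and let $X\in\mathbb{C}^{n\times n}$. Then for every $k=1,\dots,n$, \[ \prod_{j=1}^k\sigma_j(X^*DX)\le\prod_{j=1}^k\sigma_j(X^*|D|X), \] where $|D|=\mathrm{diag}(|d_1|,\dots,|d_n|)$.
   Context: For a matrix $Y$, $\sigma_1(Y)\ge\sigma_2(Y)\ge\cdots\ge\sigma_n(Y)$ denote its singular values in nonincreasing order. $X^*$ is the conjugate transpose of $X$, and $|D|=(D^*D)^{1/2}$. *)

theory Defs
  imports "Jordan_Normal_Form.Schur_Decomposition" "HOL-Computational_Algebra.Polynomial"
begin

text \<open>Eigenvalues of a square complex matrix, listed with algebraic multiplicity
  (the order of the list is irrelevant, it is sorted below).\<close>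
definition eigvals :: "complex mat \<Rightarrow> complex list" where
  "eigvals A = (SOME es. length es = dim_row A \<and>
      char_poly A = (\<Prod>e\<leftarrow>es. [:- e, 1:]))"

definition sing_vals :: "complex mat \<Rightarrow> real list" where
  "sing_vals Y = rev (sort (map (\<lambda>e. sqrt (Re e)) (eigvals (mat_adjoint Y * Y))))"

definition sigma :: "nat \<Rightarrow> complex mat \<Rightarrow> real" where
  "sigma j Y = sing_vals Y ! (j - 1)"

end

theory Submission
  imports Defs "Jordan_Normal_Form.DL_Missing_Sublist"
begin

lemma adj_alt: "mat_adjoint (A::complex mat) = mat (dim_col A) (dim_row A) (\<lambda>(i,j). cnj (A $$ (j,i)))"
  unfolding mat_adjoint_def by (rule eq_matI) (auto simp: mat_of_rows_def)

lemma adj_dims[simp]: "dim_row (mat_adjoint (A::complex mat)) = dim_col A"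
  "dim_col (mat_adjoint (A::complex mat)) = dim_row A"
  by (simp_all add: adj_alt)

lemma adj_index[simp]: "i < dim_col A \<Longrightarrow> j < dim_row A \<Longrightarrow> mat_adjoint (A::complex mat) $$ (i,j) = cnj (A $$ (j,i))"
  by (simp add: adj_alt)

lemma adj_carrier[simp]: "(A::complex mat) \<in> carrier_mat n m \<Longrightarrow> mat_adjoint A \<in> carrier_mat m n"
  unfolding carrier_mat_def by simp

lemma adj_adj[simp]: "mat_adjoint (mat_adjoint (A::complex mat)) = A"
  by (rule eq_matI) auto

lemma adj_mult: assumes "(A::complex mat) \<in> carrier_mat n m" "B \<in> carrier_mat m p"
  shows "mat_adjoint (A * B) = mat_adjoint B * mat_adjoint A"
proof (rule eq_matI)
  fix i j assume ij: "i < dim_row (mat_adjoint B * mat_adjoint A)" "j < dim_col (mat_adjoint B * mat_adjoint A)"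
  hence i: "i < p" and j: "j < n" using assms by auto
  have "mat_adjoint (A * B) $$ (i, j) = cnj (\<Sum>l<m. A $$ (j,l) * B $$ (l,i))"
    using assms i j by (simp add: scalar_prod_def atLeast0LessThan)
  also have "\<dots> = (\<Sum>l<m. cnj (B $$ (l,i)) * cnj (A $$ (j,l)))"
    by (simp add: cnj_sum mult.commute)
  also have "\<dots> = (mat_adjoint B * mat_adjoint A) $$ (i, j)"
    using assms i j by (simp add: scalar_prod_def atLeast0LessThan)
  finally show "mat_adjoint (A * B) $$ (i, j) = (mat_adjoint B * mat_adjoint A) $$ (i, j)" .
qed (use assms in auto)

lemma adj_diag[simp]: "mat_adjoint (mat_diag n f) = mat_diag n (\<lambda>i. cnj (f i))"
  by (rule eq_matI) (auto simp: mat_diag_def)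

lemma adj_one[simp]: "mat_adjoint (1\<^sub>m n :: complex mat) = 1\<^sub>m n"
  by (rule eq_matI) auto

lemma cnj_comm_ring_hom: "comm_ring_hom cnj"
  by unfold_locales auto

lemma det_adj: assumes "(A::complex mat) \<in> carrier_mat n n"
  shows "det (mat_adjoint A) = cnj (det A)"
proof -
  have "mat_adjoint A = map_mat cnj (transpose_mat A)"
    using assms by (intro eq_matI) auto
  then show ?thesis using det_transpose[OF assms] comm_ring_hom.hom_det[OF cnj_comm_ring_hom] by simp
qed

definition csub :: "'a mat \<Rightarrow> nat set \<Rightarrow> 'a mat" where
  "csub A S = mat (dim_row A) (card S) (\<lambda>(i,j). A $$ (i, pick S j))"

definition rsub :: "'a mat \<Rightarrow> nat set \<Rightarrow> 'a mat" where
  "rsub B S = mat (card S) (dim_col B) (\<lambda>(i,j). B $$ (pick S i, j))"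

lemma csub_carrier[simp]: "csub A S \<in> carrier_mat (dim_row A) (card S)"
  unfolding csub_def by simp
lemma rsub_carrier[simp]: "rsub B S \<in> carrier_mat (card S) (dim_col B)"
  unfolding rsub_def by simp

lemma pick_image: assumes "finite S" shows "pick S ` {0..<card S} = S"
proof
  show "pick S ` {0..<card S} \<subseteq> S" using pick_in_set by auto
  show "S \<subseteq> pick S ` {0..<card S}"
  proof
    fix x assume x: "x \<in> S"
    have "{a\<in>S. a < x} \<subset> S" using x by auto
    hence "card {a\<in>S. a < x} < card S" using assms by (simp add: psubset_card_mono)
    moreover have "pick S (card {a\<in>S. a < x}) = x" using pick_card_in_set[OF x] .
    ultimately show "x \<in> pick S ` {0..<card S}" by force
  qed
qed

lemma pick_inj: "inj_on (pick S) {0..<card S}"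
proof (rule inj_onI)
  fix x y assume "x \<in> {0..<card S}" "y \<in> {0..<card S}" "pick S x = pick S y"
  thus "x = y" using pick_mono[of x S y] pick_mono[of y S x]
    by (metis atLeastLessThan_iff linorder_neqE_nat less_irrefl)
qed

lemma prod_pick: assumes "finite S" shows "(\<Prod>i\<in>S. f i) = (\<Prod>j<card S. f (pick S j))"
proof -
  have "(\<Prod>i\<in>S. f i) = (\<Prod>i\<in>pick S ` {0..<card S}. f i)" using pick_image[OF assms] by simp
  also have "\<dots> = (\<Prod>j\<in>{0..<card S}. f (pick S j))" by (rule prod.reindex[OF pick_inj, unfolded o_def])
  finally show ?thesis by (simp add: atLeast0LessThan)
qed

theorem cauchy_binet:
  fixes A B :: "'a::comm_ring_1 mat"
  assumes A: "A \<in> carrier_mat k n" and B: "B \<in> carrier_mat n k"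
  shows "det (A * B) = (\<Sum>S\<in>{S. S \<subseteq> {0..<n} \<and> card S = k}. det (csub A S) * det (rsub B S))"
proof -
  let ?U = "{0..<k}"
  let ?F = "{f. (\<forall>i\<in>?U. f i \<in> {0..<n}) \<and> (\<forall>i. i \<notin> ?U \<longrightarrow> f i = i)}"
  let ?g = "\<lambda>f. det (mat\<^sub>r k k (\<lambda>i. A $$ (i, f i) \<cdot>\<^sub>v row B (f i)))"
  let ?I = "{f\<in>?F. inj_on f ?U}"
  let ?Sk = "{S. S \<subseteq> {0..<n} \<and> card S = k}"
  let ?T = "Sigma ?Sk (\<lambda>_. {p. p permutes ?U})"
  let ?phi = "\<lambda>(S::nat set,p::nat\<Rightarrow>nat). (\<lambda>i. if i < k then pick S (p i) else i)"
  let ?psi = "\<lambda>f::nat\<Rightarrow>nat. (f ` ?U, (\<lambda>i. if i < k then card {a \<in> f ` ?U. a < f i} else i))"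
  have fF: "finite ?F" by (rule finite_bounded_functions, auto)
  have phipsi: "?phi (?psi f) = f" if f: "f \<in> ?I" for f
  proof -
    let ?S = "f ` ?U"
    show "?phi (?psi f) = f"
    proof
      fix i show "?phi (?psi f) i = f i"
      proof (cases "i < k")
        case True
        hence "f i \<in> ?S" by auto
        thus ?thesis using True by (simp add: pick_card_in_set)
      next
        case False thus ?thesis using f by auto
      qed
    qed
  qed
  have "det (A * B) = sum ?g ?F"
    unfolding mat_mul_finsum_alt[OF A B]
    by (rule det_linear_rows_sum, insert A B, auto)
  also have "\<dots> = sum ?g ?I"
  proof (rule sum.mono_neutral_right[OF fF])
    show "?I \<subseteq> ?F" by auto
    show "\<forall>f\<in>?F - ?I. ?g f = 0"
    proof
      fix f assume f: "f \<in> ?F - ?I"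
      then obtain i j where ij: "f i = f j" "i \<noteq> j" "i < k" "j < k"
        unfolding inj_on_def by auto
      have Bf: "mat\<^sub>r k k (\<lambda>i. row B (f i)) \<in> carrier_mat k k" by simp
      have "?g f = prod (\<lambda>i. A $$ (i, f i)) {0..<k} * det (mat\<^sub>r k k (\<lambda>i. row B (f i)))"
        by (rule det_rows_mul, insert B, auto)
      also have "det (mat\<^sub>r k k (\<lambda>i. row B (f i))) = 0"
        by (rule det_identical_rows[OF Bf ij(2-4)], insert ij, auto)
      finally show "?g f = 0" by simp
    qed
  qed
  also have "\<dots> = (\<Sum>(S,p)\<in>?T. ?g (?phi (S,p)))"
  proof (rule sum.reindex_bij_witness[where i = ?phi and j = ?psi])
    fix f assume f: "f \<in> ?I"
    show "?phi (?psi f) = f" by (rule phipsi[OF f])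
  next
    fix f assume f: "f \<in> ?I"
    let ?S = "f ` ?U"
    have fin: "finite ?S" by simp
    have cS: "card ?S = k" using f card_image[of f ?U] by auto
    show "?psi f \<in> ?T"
    proof -
      have "?S \<subseteq> {0..<n}" using f by auto
      moreover
      have "(\<lambda>i. if i < k then card {a \<in> ?S. a < f i} else i) permutes ?U"
      proof (rule inj_on_nat_permutes)
        show "inj_on (\<lambda>i. if i < k then card {a \<in> ?S. a < f i} else i) ?U"
        proof (rule inj_onI)
          fix x y assume xy: "x \<in> ?U" "y \<in> ?U"
            "(if x < k then card {a \<in> ?S. a < f x} else x) = (if y < k then card {a \<in> ?S. a < f y} else y)"
          hence eq: "card {a \<in> ?S. a < f x} = card {a \<in> ?S. a < f y}" by auto
          have "f x = pick ?S (card {a \<in> ?S. a < f x})" by (rule pick_card_in_set[symmetric]) (use xy(1) in auto)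
          also have "\<dots> = pick ?S (card {a \<in> ?S. a < f y})" using eq by simp
          also have "\<dots> = f y" by (rule pick_card_in_set) (use xy(2) in auto)
          finally have "f x = f y" .
          thus "x = y" using f xy unfolding inj_on_def by auto
        qed
        show "(\<lambda>i. if i < k then card {a \<in> ?S. a < f i} else i) \<in> ?U \<rightarrow> ?U"
        proof
          fix x assume x: "x \<in> ?U"
          hence "f x \<in> ?S" by auto
          hence "{a \<in> ?S. a < f x} \<subset> ?S" by auto
          hence "card {a \<in> ?S. a < f x} < card ?S" using fin by (simp add: psubset_card_mono)
          thus "(if x < k then card {a \<in> ?S. a < f x} else x) \<in> ?U" using x cS by auto
        qed
      qed auto
      ultimately show ?thesis using cS by auto
    qed
  next
    fix Sp assume Sp: "Sp \<in> ?T"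
    obtain S p where Sp_def: "Sp = (S,p)" by force
    have S: "S \<subseteq> {0..<n}" "card S = k" and p: "p permutes ?U" using Sp Sp_def by auto
    have fin: "finite S" using S(1) finite_subset by blast
    have pU: "i < k \<Longrightarrow> p i < k" for i using permutes_in_image[OF p, of i] by auto
    have pid: "\<not> i < k \<Longrightarrow> p i = i" for i using permutes_not_in[OF p, of i] by auto
    have img: "?phi Sp ` ?U = S"
    proof -
      have "?phi Sp ` ?U = pick S ` (p ` ?U)" using Sp_def by (auto simp: image_image)
      also have "p ` ?U = ?U" using permutes_image[OF p] .
      finally show ?thesis using pick_image[OF fin] S by simp
    qed
    show "?psi (?phi Sp) = Sp"
    proof -
      have "(\<lambda>i. if i < k then card {a \<in> ?phi Sp ` ?U. a < ?phi Sp i} else i) = p"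
      proof
        fix i show "(if i < k then card {a \<in> ?phi Sp ` ?U. a < ?phi Sp i} else i) = p i"
          using card_pick[of "p i" S] pU[of i] pid[of i] S img Sp_def by auto
      qed
      thus ?thesis using img Sp_def by simp
    qed
    show "?phi Sp \<in> ?I"
    proof -
      have "\<forall>i\<in>?U. ?phi Sp i \<in> {0..<n}"
      proof
        fix i assume i: "i \<in> ?U"
        hence "pick S (p i) \<in> S" using pick_in_set[of "p i" S] pU[of i] S by auto
        thus "?phi Sp i \<in> {0..<n}" using S(1) i Sp_def by auto
      qed
      moreover have "inj_on (?phi Sp) ?U"
      proof (rule inj_onI)
        fix x y assume "x \<in> ?U" "y \<in> ?U" "?phi Sp x = ?phi Sp y"
        hence "p x = p y" using pick_inj[of S] pU S Sp_def unfolding inj_on_def by auto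
        thus "x = y" using permutes_inj[OF p] unfolding inj_def by auto
      qed
      ultimately show ?thesis using Sp_def by auto
    qed
  next
    fix f assume f: "f \<in> ?I"
    show "(case ?psi f of (S,p) \<Rightarrow> ?g (?phi (S,p))) = ?g f" using arg_cong[OF phipsi[OF f], of ?g] by (simp only: prod.case)
  qed
  also have "\<dots> = (\<Sum>S\<in>?Sk. \<Sum>p\<in>{p. p permutes ?U}. ?g (?phi (S,p)))"
  proof (rule sum.Sigma[symmetric])
    show "finite ?Sk" by (rule finite_subset[of _ "Pow {0..<n}"]) auto
  qed (auto simp: finite_permutations)
  also have "\<dots> = (\<Sum>S\<in>?Sk. det (csub A S) * det (rsub B S))"
  proof (rule sum.cong[OF refl])
    fix S assume "S \<in> ?Sk"
    hence S: "S \<subseteq> {0..<n}" "card S = k" by auto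
    have RB: "rsub B S \<in> carrier_mat k k" using rsub_carrier[of B S] S B by simp
    have CA: "csub A S \<in> carrier_mat k k" using csub_carrier[of A S] S A by simp
    {
      fix p assume p: "p permutes ?U"
      have pU: "i < k \<Longrightarrow> p i < k" for i using permutes_in_image[OF p, of i] by auto
      have "?g (?phi (S,p)) = prod (\<lambda>i. A $$ (i, ?phi (S,p) i)) {0..<k} * det (mat\<^sub>r k k (\<lambda>i. row B (?phi (S,p) i)))"
        by (rule det_rows_mul, insert B, auto)
      also have "mat\<^sub>r k k (\<lambda>i. row B (?phi (S,p) i)) = mat k k (\<lambda>(i,j). rsub B S $$ (p i, j))"
        by (rule eq_matI, insert B S pU, auto simp: rsub_def row_def)
      also have "det \<dots> = signof p * det (rsub B S)" by (rule det_permute_rows[OF RB p])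
      also have "prod (\<lambda>i. A $$ (i, ?phi (S,p) i)) {0..<k} = prod (\<lambda>i. csub A S $$ (i, p i)) {0..<k}"
        by (rule prod.cong, insert A S pU, auto simp: csub_def)
      finally have "?g (?phi (S,p)) = det (rsub B S) * (signof p * prod (\<lambda>i. csub A S $$ (i, p i)) {0..<k})"
        by (simp add: ac_simps)
    } note * = this
    have "(\<Sum>p\<in>{p. p permutes ?U}. ?g (?phi (S,p))) = det (rsub B S) * (\<Sum>p\<in>{p. p permutes ?U}. signof p * prod (\<lambda>i. csub A S $$ (i, p i)) {0..<k})"
      unfolding sum_distrib_left by (rule sum.cong[OF refl], rule *, simp)
    also have "\<dots> = det (rsub B S) * det (csub A S)" unfolding det_def'[OF CA] by simp
    finally show "(\<Sum>p\<in>{p. p permutes ?U}. ?g (?phi (S,p))) = det (csub A S) * det (rsub B S)" by simp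
  qed
  finally show ?thesis .
qed

lemma mult_idx: assumes "A \<in> carrier_mat k n" "B \<in> carrier_mat n p" "i < k" "j < p"
  shows "(A * B) $$ (i,j) = (\<Sum>l<n. A $$ (i,l) * B $$ (l,j))"
  using assms by (auto simp: scalar_prod_def atLeast0LessThan intro!: sum.cong)

lemma cprod_self: fixes w :: "complex vec"
  shows "w \<bullet>c w = complex_of_real (\<Sum>l<dim_vec w. (cmod (w $ l))\<^sup>2)"
proof -
  have "w \<bullet>c w = (\<Sum>l<dim_vec w. w$l * cnj (w$l))" by (simp add: scalar_prod_def atLeast0LessThan)
  also have "\<dots> = (\<Sum>l<dim_vec w. complex_of_real ((cmod (w$l))\<^sup>2))" by (simp only: complex_norm_square)
  also have "\<dots> = complex_of_real (\<Sum>l<dim_vec w. (cmod (w $ l))\<^sup>2)" by (simp only: of_real_sum)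
  finally show ?thesis .
qed

lemma herm_step_basis:
  fixes v :: "complex vec"
  assumes v: "v \<in> carrier_vec n" and v0: "v \<noteq> 0\<^sub>v n"
  shows "\<exists>W c. W \<in> carrier_mat n n \<and> mat_adjoint W * W = 1\<^sub>m n \<and> col W 0 = c \<cdot>\<^sub>v v"
proof -
  interpret cof_vec_space n "TYPE(complex)" .
  define b where "b = basis_completion v"
  define ws where "ws = gram_schmidt n b"
  from basis_completion[OF v v0, folded b_def]
  have dist_b: "distinct b" and indep: "\<not> lin_dep (set b)" and b: "set b \<subseteq> carrier_vec n"
    and hdb: "hd b = v" and len_b: "length b = n" by auto
  have n: "n \<noteq> 0" using v v0 by (metis carrier_vecD eq_vecI index_zero_vec(2) less_nat_zero_code)
  from hdb len_b n obtain vs where bv: "b = v # vs" by (cases b, auto)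
  from gram_schmidt_result[OF b dist_b indep refl, folded ws_def]
  have ws: "set ws \<subseteq> carrier_vec n" "corthogonal ws" "length ws = n"
    by (auto simp: len_b)
  from gram_schmidt_hd[OF v, of vs, folded bv] have hdws: "hd ws = v" unfolding ws_def .
  have ws0: "ws ! 0 = v" using hdws ws(3) n by (metis hd_conv_nth list.size(3))
  have wsc: "i < n \<Longrightarrow> ws ! i \<in> carrier_vec n" for i using ws by auto
  define r where "r i = (\<Sum>l<n. (cmod (ws ! i $ l))\<^sup>2)" for i
  have r: "ws ! i \<bullet>c ws ! i = complex_of_real (r i)" if "i < n" for i
    using cprod_self[of "ws ! i"] wsc[OF that] unfolding r_def by simp
  have rpos: "r i > 0" if i: "i < n" for i
  proof -
    have "ws ! i \<bullet>c ws ! i \<noteq> 0" using ws(2) i ws(3) unfolding corthogonal_def by auto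
    hence "r i \<noteq> 0" using r[OF i] by auto
    moreover have "r i \<ge> 0" unfolding r_def by (intro sum_nonneg) auto
    ultimately show ?thesis by simp
  qed
  define c where "c i = complex_of_real (1 / sqrt (r i))" for i
  define W where "W = mat n n (\<lambda>(i,j). ws ! j $ i * c j)"
  have Wc: "W \<in> carrier_mat n n" unfolding W_def by simp
  have "mat_adjoint W * W = 1\<^sub>m n"
  proof (rule eq_matI)
    fix i j assume "i < dim_row (1\<^sub>m n :: complex mat)" "j < dim_col (1\<^sub>m n :: complex mat)"
    hence i: "i < n" and j: "j < n" by auto
    have "(mat_adjoint W * W) $$ (i,j) = (\<Sum>l<n. cnj (W $$ (l,i)) * W $$ (l,j))"
      using mult_idx[OF adj_carrier[OF Wc] Wc i j] Wc i j by simp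
    also have "\<dots> = (\<Sum>l<n. cnj (c i) * c j * (ws ! j $ l * cnj (ws ! i $ l)))"
      using i j unfolding W_def by (intro sum.cong) (auto simp: ac_simps)
    also have "\<dots> = cnj (c i) * c j * (ws ! j \<bullet>c ws ! i)"
      using wsc[OF i] wsc[OF j] by (simp add: scalar_prod_def sum_distrib_left atLeast0LessThan)
    also have "\<dots> = 1\<^sub>m n $$ (i,j)"
    proof (cases "i = j")
      case True
      have "cnj (c i) * c i * complex_of_real (r i) = complex_of_real ((1 / sqrt (r i)) * (1 / sqrt (r i)) * r i)"
        by (simp only: c_def complex_cnj_complex_of_real of_real_mult)
      also have "(1 / sqrt (r i)) * (1 / sqrt (r i)) * r i = 1"
      proof -
        have s: "sqrt (r i) * sqrt (r i) = r i" using rpos[OF i] by simp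
        have sp: "sqrt (r i) > 0" using rpos[OF i] by simp
        show ?thesis using s sp by (simp add: field_simps)
      qed
      finally show ?thesis using True r[OF i] i by simp
    next
      case False
      hence "ws ! j \<bullet>c ws ! i = 0" using ws(2) i j ws(3) unfolding corthogonal_def by auto
      thus ?thesis using False i j by simp
    qed
    finally show "(mat_adjoint W * W) $$ (i,j) = 1\<^sub>m n $$ (i,j)" .
  qed (use Wc in auto)
  moreover have "col W 0 = c 0 \<cdot>\<^sub>v v"
    using n v ws0 unfolding W_def by (intro eq_vecI) (auto simp: ac_simps)
  ultimately show ?thesis using Wc by blast
qed

theorem hermitian_spectral:
  fixes A :: "complex mat"
  assumes "A \<in> carrier_mat n n" "mat_adjoint A = A"
  shows "\<exists>U lam. U \<in> carrier_mat n n \<and> mat_adjoint U * U = 1\<^sub>m n \<and>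
           A = U * mat_diag n (\<lambda>i. complex_of_real (lam i)) * mat_adjoint U"
  using assms
proof (induction n arbitrary: A)
  case 0
  then show ?case by (intro exI[of _ "1\<^sub>m 0"] exI[of _ "\<lambda>_. 0"]) (auto intro!: eq_matI)
next
  case (Suc m A)
  let ?n = "Suc m"
  have A: "A \<in> carrier_mat ?n ?n" and AH: "mat_adjoint A = A" using Suc.prems by auto
  obtain as where cp: "char_poly A = (\<Prod>a\<leftarrow>as. [:-a,1:])" and las: "length as = ?n"
    using char_poly_factorized[OF A] by blast
  then obtain e rest where as: "as = e # rest" by (cases as) auto
  have "poly (char_poly A) e = 0" using cp as by simp
  hence "eigenvalue A e" using eigenvalue_root_char_poly[OF A] by simp
  then obtain v where ev: "eigenvector A v e" unfolding eigenvalue_def by blast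
  hence v: "v \<in> carrier_vec ?n" "v \<noteq> 0\<^sub>v ?n" and Av: "A *\<^sub>v v = e \<cdot>\<^sub>v v"
    using A unfolding eigenvector_def by auto
  obtain W c where W: "W \<in> carrier_mat ?n ?n" and WW: "mat_adjoint W * W = 1\<^sub>m ?n"
    and W0: "col W 0 = c \<cdot>\<^sub>v v" using herm_step_basis[OF v] by blast
  have aW: "mat_adjoint W \<in> carrier_mat ?n ?n" using W by simp
  have WW': "W * mat_adjoint W = 1\<^sub>m ?n" using mat_mult_left_right_inverse[OF aW W WW] .
  define A' where "A' = mat_adjoint W * A * W"
  have A'c: "A' \<in> carrier_mat ?n ?n" unfolding A'_def using aW A W by (meson mult_carrier_mat)
  have A'H: "mat_adjoint A' = A'"
  proof -
    have "mat_adjoint A' = mat_adjoint W * mat_adjoint (mat_adjoint W * A)"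
      unfolding A'_def by (rule adj_mult[of _ ?n ?n]) (use aW A W in auto)
    also have "mat_adjoint (mat_adjoint W * A) = mat_adjoint A * W"
      by (subst adj_mult[OF aW A]) simp
    finally show ?thesis unfolding A'_def AH adj_adj assoc_mult_mat[OF aW A W] .
  qed
  have colAW: "col (A * W) 0 = e \<cdot>\<^sub>v col W 0"
  proof -
    have "col (A * W) 0 = A *\<^sub>v col W 0" by (rule col_mult2[OF A W]) simp
    also have "\<dots> = c \<cdot>\<^sub>v (A *\<^sub>v v)" unfolding W0 by (rule mult_mat_vec[OF A v(1)])
    also have "\<dots> = e \<cdot>\<^sub>v col W 0" unfolding Av W0 by (simp add: smult_smult_assoc mult.commute)
    finally show ?thesis .
  qed
  have col0: "A' $$ (i, 0) = (if i = 0 then e else 0)" if i: "i < ?n" for i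
  proof -
    have "A' = mat_adjoint W * (A * W)" unfolding A'_def by (rule assoc_mult_mat[OF aW A W])
    hence "A' $$ (i,0) = row (mat_adjoint W) i \<bullet> col (A * W) 0" using i aW A W by simp
    also have "\<dots> = e * (row (mat_adjoint W) i \<bullet> col W 0)" unfolding colAW using W aW by simp
    also have "row (mat_adjoint W) i \<bullet> col W 0 = (mat_adjoint W * W) $$ (i,0)" using i aW W by simp
    also have "\<dots> = (if i = 0 then 1 else 0)" unfolding WW using i by simp
    finally show ?thesis by simp
  qed
  have row0: "A' $$ (0, j) = (if j = 0 then cnj e else 0)" if j: "j < ?n" for j
  proof -
    have "A' $$ (0,j) = mat_adjoint A' $$ (0,j)" using A'H by simp
    also have "\<dots> = cnj (A' $$ (j,0))" using A'c j by simp
    finally show ?thesis using col0[OF j] by simp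
  qed
  have ereal: "cnj e = e" using col0[of 0] row0[of 0] by simp
  define A3 where "A3 = mat m m (\<lambda>(i,j). A' $$ (Suc i, Suc j))"
  have A3c: "A3 \<in> carrier_mat m m" unfolding A3_def by simp
  have A3H: "mat_adjoint A3 = A3"
  proof (rule eq_matI)
    fix i j assume "i < dim_row A3" "j < dim_col A3"
    hence i: "i < m" and j: "j < m" using A3c by auto
    have "mat_adjoint A3 $$ (i,j) = cnj (A' $$ (Suc j, Suc i))" using i j unfolding A3_def by simp
    also have "\<dots> = mat_adjoint A' $$ (Suc i, Suc j)" using i j A'c by simp
    also have "\<dots> = A3 $$ (i,j)" using i j unfolding A'H A3_def by simp
    finally show "mat_adjoint A3 $$ (i,j) = A3 $$ (i,j)" .
  qed (use A3c in auto)
  obtain U3 lam3 where U3: "U3 \<in> carrier_mat m m" and U3U: "mat_adjoint U3 * U3 = 1\<^sub>m m"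
    and A3d: "A3 = U3 * mat_diag m (\<lambda>i. complex_of_real (lam3 i)) * mat_adjoint U3"
    using Suc.IH[OF A3c A3H] by blast
  define E where "E = mat ?n ?n (\<lambda>(i,j). if i = 0 \<and> j = 0 then 1 else if i = 0 \<or> j = 0 then 0 else U3 $$ (i - 1, j - 1))"
  define lam where "lam = (\<lambda>i. if i = 0 then Re e else lam3 (i - 1))"
  have Ec: "E \<in> carrier_mat ?n ?n" unfolding E_def by simp
  have aE: "mat_adjoint E \<in> carrier_mat ?n ?n" using Ec by simp
  have E00: "E $$ (0,0) = 1" and E0S: "j < m \<Longrightarrow> E $$ (0, Suc j) = 0" and ES0: "i < m \<Longrightarrow> E $$ (Suc i, 0) = 0"
    and ESS: "i < m \<Longrightarrow> j < m \<Longrightarrow> E $$ (Suc i, Suc j) = U3 $$ (i,j)" for i j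
    unfolding E_def by auto
  have EE: "mat_adjoint E * E = 1\<^sub>m ?n"
  proof (rule eq_matI)
    fix i j assume "i < dim_row (1\<^sub>m ?n :: complex mat)" "j < dim_col (1\<^sub>m ?n :: complex mat)"
    hence i: "i < ?n" and j: "j < ?n" by auto
    have "(mat_adjoint E * E) $$ (i,j) = (\<Sum>l<?n. cnj (E $$ (l,i)) * E $$ (l,j))"
      using mult_idx[OF aE Ec i j] Ec i j by simp
    also have "\<dots> = cnj (E $$ (0,i)) * E $$ (0,j) + (\<Sum>l<m. cnj (E $$ (Suc l,i)) * E $$ (Suc l,j))"
      by (rule sum.lessThan_Suc_shift)
    also have "\<dots> = 1\<^sub>m ?n $$ (i,j)"
    proof (cases i)
      case 0
      show ?thesis
      proof (cases j)
        case 0 thus ?thesis using \<open>i = 0\<close> by (simp add: E00 ES0)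
      next
        case (Suc j') thus ?thesis using \<open>i = 0\<close> j by (simp add: E00 E0S ES0)
      qed
    next
      case (Suc i')
      show ?thesis
      proof (cases j)
        case 0 thus ?thesis using \<open>i = Suc i'\<close> i by (simp add: E00 E0S ES0)
      next
        case (Suc j')
        have "(\<Sum>l<m. cnj (E $$ (Suc l,i)) * E $$ (Suc l,j)) = (\<Sum>l<m. cnj (U3 $$ (l,i')) * U3 $$ (l,j'))"
          using \<open>i = Suc i'\<close> \<open>j = Suc j'\<close> i j by (intro sum.cong) (auto simp: ESS)
        also have "\<dots> = (mat_adjoint U3 * U3) $$ (i',j')"
          using mult_idx[OF adj_carrier[OF U3] U3, of i' j'] i j \<open>i = Suc i'\<close> \<open>j = Suc j'\<close> U3 by simp
        also have "\<dots> = 1\<^sub>m ?n $$ (i,j)" unfolding U3U using i j \<open>i = Suc i'\<close> \<open>j = Suc j'\<close> by simp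
        finally show ?thesis using \<open>i = Suc i'\<close> \<open>j = Suc j'\<close> i j by (simp add: E0S)
      qed
    qed
    finally show "(mat_adjoint E * E) $$ (i,j) = 1\<^sub>m ?n $$ (i,j)" .
  qed (use aE Ec in auto)
  let ?L = "mat_diag ?n (\<lambda>i. complex_of_real (lam i))"
  let ?L3 = "mat_diag m (\<lambda>i. complex_of_real (lam3 i))"
  have trip: "(X * mat_diag k g * Y) $$ (i,j) = (\<Sum>l<k. X $$ (i,l) * g l * Y $$ (l,j))"
    if "X \<in> carrier_mat p k" "Y \<in> carrier_mat k q" "i < p" "j < q" for X Y p q k i g j
  proof -
    have "X * mat_diag k g = mat p k (\<lambda>(i,j). X $$ (i,j) * g j)" by (rule mat_diag_mult_right[OF that(1)])
    moreover have "mat p k (\<lambda>(i,j). X $$ (i,j) * g j) \<in> carrier_mat p k" by simp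
    ultimately show ?thesis using mult_idx[of "X * mat_diag k g" p k Y q i j] that by simp
  qed
  have A'E: "A' = E * ?L * mat_adjoint E"
  proof (rule eq_matI)
    fix i j assume "i < dim_row (E * ?L * mat_adjoint E)" "j < dim_col (E * ?L * mat_adjoint E)"
    hence i: "i < ?n" and j: "j < ?n" using Ec by auto
    have "(E * ?L * mat_adjoint E) $$ (i,j) = (\<Sum>l<?n. E $$ (i,l) * complex_of_real (lam l) * mat_adjoint E $$ (l,j))"
      by (rule trip[OF Ec aE i j])
    also have "\<dots> = (\<Sum>l<?n. E $$ (i,l) * complex_of_real (lam l) * cnj (E $$ (j,l)))"
      using j Ec by (intro sum.cong) auto
    also have "\<dots> = E $$ (i,0) * complex_of_real (lam 0) * cnj (E $$ (j,0)) +
        (\<Sum>l<m. E $$ (i,Suc l) * complex_of_real (lam (Suc l)) * cnj (E $$ (j,Suc l)))"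
      by (rule sum.lessThan_Suc_shift)
    also have "\<dots> = A' $$ (i,j)"
    proof (cases i)
      case 0
      show ?thesis
      proof (cases j)
        case 0
        have "Im e = 0" using ereal by (simp add: complex_eq_iff)
        hence "complex_of_real (Re e) = e" by (simp add: complex_eq_iff)
        thus ?thesis using \<open>i = 0\<close> 0 col0[of 0] by (simp add: E00 E0S lam_def)
      next
        case (Suc j') thus ?thesis using \<open>i = 0\<close> j row0[OF j] by (simp add: E00 E0S ES0)
      qed
    next
      case (Suc i')
      show ?thesis
      proof (cases j)
        case 0 thus ?thesis using \<open>i = Suc i'\<close> i col0[OF i] by (simp add: E00 E0S ES0)
      next
        case (Suc j')
        have "(\<Sum>l<m. E $$ (i,Suc l) * complex_of_real (lam (Suc l)) * cnj (E $$ (j,Suc l))) =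
              (\<Sum>l<m. U3 $$ (i',l) * complex_of_real (lam3 l) * mat_adjoint U3 $$ (l,j'))"
          using \<open>i = Suc i'\<close> \<open>j = Suc j'\<close> i j U3 by (intro sum.cong) (auto simp: ESS lam_def)
        also have "\<dots> = A3 $$ (i',j')" unfolding A3d
          by (rule trip[symmetric, OF U3 adj_carrier[OF U3]]) (use i j \<open>i = Suc i'\<close> \<open>j = Suc j'\<close> in auto)
        also have "\<dots> = A' $$ (i,j)" unfolding A3_def using i j \<open>i = Suc i'\<close> \<open>j = Suc j'\<close> by simp
        finally show ?thesis using \<open>i = Suc i'\<close> \<open>j = Suc j'\<close> i j by (simp add: ES0)
      qed
    qed
    finally show "A' $$ (i,j) = (E * ?L * mat_adjoint E) $$ (i,j)" by simp
  qed (use Ec A'c in auto)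
  define U where "U = W * E"
  have Uc: "U \<in> carrier_mat ?n ?n" unfolding U_def using W Ec by simp
  have aU: "mat_adjoint U = mat_adjoint E * mat_adjoint W" unfolding U_def by (rule adj_mult[OF W Ec])
  have WE: "W * E \<in> carrier_mat ?n ?n" using W Ec by (rule mult_carrier_mat)
  have UU: "mat_adjoint U * U = 1\<^sub>m ?n"
  proof -
    have "mat_adjoint U * U = (mat_adjoint E * mat_adjoint W) * (W * E)" by (subst aU) (simp only: U_def)
    also have "\<dots> = mat_adjoint E * (mat_adjoint W * (W * E))" by (rule assoc_mult_mat[OF aE aW WE])
    also have "mat_adjoint W * (W * E) = (mat_adjoint W * W) * E" by (rule assoc_mult_mat[OF aW W Ec, symmetric])
    also have "\<dots> = E" unfolding WW using Ec by simp
    finally show ?thesis using EE by simp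
  qed
  have AW: "A * W \<in> carrier_mat ?n ?n" using A W by (rule mult_carrier_mat)
  have "A = W * A' * mat_adjoint W"
  proof -
    have "W * A' = W * (mat_adjoint W * (A * W))" unfolding A'_def by (simp only: assoc_mult_mat[OF aW A W])
    also have "\<dots> = (W * mat_adjoint W) * (A * W)" by (rule assoc_mult_mat[OF W aW AW, symmetric])
    also have "\<dots> = A * W" unfolding WW' by (rule left_mult_one_mat[OF AW])
    finally have "W * A' * mat_adjoint W = A * W * mat_adjoint W" by simp
    also have "\<dots> = A * (W * mat_adjoint W)" by (rule assoc_mult_mat[OF A W aW])
    also have "\<dots> = A" unfolding WW' using A by simp
    finally show ?thesis by simp
  qed
  also have "\<dots> = U * ?L * mat_adjoint U"
  proof -
    have Lc: "?L \<in> carrier_mat ?n ?n" by simp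
    have X: "E * ?L \<in> carrier_mat ?n ?n" using Ec Lc by (rule mult_carrier_mat)
    have WX: "W * (E * ?L) \<in> carrier_mat ?n ?n" using W X by (rule mult_carrier_mat)
    have "U * ?L * mat_adjoint U = ((W * E) * ?L) * (mat_adjoint E * mat_adjoint W)" by (subst aU) (simp only: U_def)
    also have "(W * E) * ?L = W * (E * ?L)" by (rule assoc_mult_mat[OF W Ec Lc])
    also have "(W * (E * ?L)) * (mat_adjoint E * mat_adjoint W) = ((W * (E * ?L)) * mat_adjoint E) * mat_adjoint W"
      by (rule assoc_mult_mat[OF WX aE aW, symmetric])
    also have "(W * (E * ?L)) * mat_adjoint E = W * ((E * ?L) * mat_adjoint E)" by (rule assoc_mult_mat[OF W X aE])
    finally show ?thesis unfolding A'E by simp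
  qed
  finally show ?case using Uc UU by blast
qed

lemma order_lin: "order a [:-e,1:] = (if a = e then 1 else (0::nat))"
proof (cases "a = e")
  case True
  then show ?thesis using order_power_n_n[of a 1] by simp
next
  case False
  have "poly [:-e,1:] a \<noteq> 0" using False by simp
  hence "order a [:-e,1:] = 0" using order_root[of "[:-e,1:]" a] by auto
  thus ?thesis using False by simp
qed

lemma order_prod_lin: "order (a::'a::idom) (\<Prod>e\<leftarrow>es. [:-e,1:]) = count (mset es) a"
proof (induction es)
  case Nil
  then show ?case using order_root[of 1 a] by simp
next
  case (Cons e es)
  have nz: "(\<Prod>e\<leftarrow>es. [:-e,1:]) \<noteq> 0" by (auto simp: prod_list_zero_iff)
  have "order a (\<Prod>e\<leftarrow>e#es. [:-e,1:]) = order a ([:-e,1:] * (\<Prod>e\<leftarrow>es. [:-e,1:]))" by simp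
  also have "\<dots> = order a [:-e,1:] + order a (\<Prod>e\<leftarrow>es. [:-e,1:])"
    by (rule order_mult, rule no_zero_divisors[OF _ nz]) simp
  finally show ?case using Cons order_lin[of a e] by auto
qed

lemma prod_lin_mset: fixes es fs :: "'a::idom list"
  assumes "(\<Prod>e\<leftarrow>es. [:-e,1:]) = (\<Prod>e\<leftarrow>fs. [:-e,1:])"
  shows "mset es = mset fs"
proof (rule multiset_eqI)
  fix a show "count (mset es) a = count (mset fs) a"
    using order_prod_lin[of a es] order_prod_lin[of a fs] assms by simp
qed

lemma eigvals_diag:
  assumes U: "U \<in> carrier_mat n n" and V: "V \<in> carrier_mat n n" and UV: "U * V = 1\<^sub>m n"
    and H: "H = U * mat_diag n f * V"
  shows "mset (eigvals H) = mset (map f [0..<n])"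
proof -
  have VU: "V * U = 1\<^sub>m n" using mat_mult_left_right_inverse[OF U V UV] .
  have Hc: "H \<in> carrier_mat n n" using H U V by (metis mult_carrier_mat mat_diag_dim)
  have "similar_mat_wit H (mat_diag n f) U V"
    by (rule similar_mat_witI[OF UV VU H Hc mat_diag_dim U V])
  hence "similar_mat H (mat_diag n f)" unfolding similar_mat_def by blast
  hence "char_poly H = char_poly (mat_diag n f)" by (rule char_poly_similar)
  also have "\<dots> = (\<Prod>a\<leftarrow>diag_mat (mat_diag n f). [:-a,1:])"
    by (rule char_poly_upper_triangular[OF mat_diag_dim]) (auto simp: upper_triangular_def mat_diag_def)
  also have "diag_mat (mat_diag n f) = map f [0..<n]"
    by (auto simp: diag_mat_def mat_diag_def intro!: map_cong)
  finally have cp: "char_poly H = (\<Prod>a\<leftarrow>map f [0..<n]. [:-a,1:])" .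
  have "\<exists>es. length es = dim_row H \<and> char_poly H = (\<Prod>e\<leftarrow>es. [:- e, 1:])"
    using cp Hc by (intro exI[of _ "map f [0..<n]"]) auto
  hence "length (eigvals H) = dim_row H \<and> char_poly H = (\<Prod>e\<leftarrow>eigvals H. [:- e, 1:])"
    unfolding eigvals_def by (rule someI_ex)
  hence "(\<Prod>e\<leftarrow>eigvals H. [:- e, 1:]) = (\<Prod>a\<leftarrow>map f [0..<n]. [:-a,1:])" using cp by simp
  thus ?thesis by (rule prod_lin_mset)
qed

definition topk :: "real list \<Rightarrow> nat \<Rightarrow> real" where
  "topk xs k = (\<Prod>j<k. rev (sort xs) ! j)"

lemma pick_prod: assumes "finite S" shows "(\<Prod>i\<in>S. f i) = (\<Prod>j<card S. f (pick S j))"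
proof -
  have img: "pick S ` {0..<card S} = S"
  proof
    show "pick S ` {0..<card S} \<subseteq> S" using pick_in_set by auto
    show "S \<subseteq> pick S ` {0..<card S}"
    proof
      fix x assume x: "x \<in> S"
      have "{a\<in>S. a < x} \<subset> S" using x by auto
      hence "card {a\<in>S. a < x} < card S" using assms by (simp add: psubset_card_mono)
      moreover have "pick S (card {a\<in>S. a < x}) = x" using pick_card_in_set[OF x] .
      ultimately show "x \<in> pick S ` {0..<card S}" by force
    qed
  qed
  have inj: "inj_on (pick S) {0..<card S}"
  proof (rule inj_onI)
    fix x y assume "x \<in> {0..<card S}" "y \<in> {0..<card S}" "pick S x = pick S y"
    thus "x = y" using pick_mono[of x S y] pick_mono[of y S x]
      by (metis atLeastLessThan_iff linorder_neqE_nat less_irrefl)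
  qed
  have "(\<Prod>i\<in>S. f i) = (\<Prod>i\<in>pick S ` {0..<card S}. f i)" using img by simp
  also have "\<dots> = (\<Prod>j\<in>{0..<card S}. f (pick S j))" by (rule prod.reindex[OF inj, unfolded o_def])
  finally show ?thesis by (simp add: atLeast0LessThan)
qed

lemma pick_ge: "j < card S \<Longrightarrow> j \<le> pick S j"
proof (induction j)
  case 0 then show ?case by simp
next
  case (Suc j)
  have "pick S j < pick S (Suc j)" using pick_mono[of "Suc j" S j] Suc.prems by auto
  with Suc show ?case by auto
qed

lemma rev_sort_desc: assumes "i \<le> j" "j < length xs"
  shows "rev (sort xs) ! j \<le> rev (sort (xs::real list)) ! i"
proof -
  have s: "sorted (sort xs)" by simp
  have "rev (sort xs) ! j = sort xs ! (length xs - Suc j)" using assms by (simp add: rev_nth)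
  also have "\<dots> \<le> sort xs ! (length xs - Suc i)"
    by (rule sorted_nth_mono[OF s]) (use assms in auto)
  also have "\<dots> = rev (sort xs) ! i" using assms by (simp add: rev_nth)
  finally show ?thesis .
qed

lemma sorted_prod_le: assumes nn: "\<And>x. x \<in> set xs \<Longrightarrow> 0 \<le> (x::real)"
  and T: "T \<subseteq> {..<length xs}" "card T = k"
  shows "(\<Prod>j\<in>T. rev (sort xs) ! j) \<le> (\<Prod>j<k. rev (sort xs) ! j)"
proof -
  have fin: "finite T" using T finite_subset by blast
  have "(\<Prod>j\<in>T. rev (sort xs) ! j) = (\<Prod>j<k. rev (sort xs) ! (pick T j))"
    using pick_prod[OF fin] T by simp
  also have "\<dots> \<le> (\<Prod>j<k. rev (sort xs) ! j)"
  proof (rule prod_mono)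
    fix j assume j: "j \<in> {..<k}"
    have pT: "pick T j \<in> T" using pick_in_set[of j T] j T by auto
    hence pl: "pick T j < length xs" using T by auto
    have "rev (sort xs) ! pick T j \<in> set xs"
      using pl by (metis length_rev length_sort nth_mem set_rev set_sort)
    hence "0 \<le> rev (sort xs) ! pick T j" using nn by auto
    moreover have "rev (sort xs) ! pick T j \<le> rev (sort xs) ! j"
      by (rule rev_sort_desc[OF _ pl]) (use pick_ge[of j T] j T in auto)
    ultimately show "0 \<le> rev (sort xs) ! pick T j \<and> rev (sort xs) ! pick T j \<le> rev (sort xs) ! j" by simp
  qed
  finally show ?thesis .
qed

lemma topk_ge: assumes nn: "\<And>x. x \<in> set xs \<Longrightarrow> 0 \<le> (x::real)"
  and S: "S \<subseteq> {..<length xs}" "card S = k"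
  shows "(\<Prod>i\<in>S. xs ! i) \<le> topk xs k"
proof -
  let ?ys = "rev (sort xs)"
  have "mset xs = mset ?ys" by simp
  from mset_eq_permutation[OF this] obtain p where p: "p permutes {..<length ?ys}"
    and pl: "permute_list p ?ys = xs" by blast
  have len: "length ?ys = length xs" by simp
  have xi: "xs ! i = ?ys ! p i" if "i \<in> S" for i
  proof -
    have "i < length ?ys" using that S by auto
    hence "permute_list p ?ys ! i = ?ys ! p i" using permute_list_nth[OF p] by auto
    thus ?thesis using pl by simp
  qed
  have inj: "inj_on p S" using permutes_inj[OF p] by (auto simp: inj_on_def inj_def)
  have "(\<Prod>i\<in>S. xs ! i) = (\<Prod>i\<in>S. ?ys ! p i)" using xi by simp
  also have "\<dots> = (\<Prod>j\<in>p ` S. ?ys ! j)" by (simp add: prod.reindex[OF inj])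
  also have "\<dots> \<le> (\<Prod>j<k. ?ys ! j)"
  proof (rule sorted_prod_le[OF nn])
    show "p ` S \<subseteq> {..<length xs}" using permutes_image[OF p] S len by auto
    show "card (p ` S) = k" using card_image[OF inj] S by simp
  qed auto
  finally show ?thesis unfolding topk_def .
qed

lemma topk_attained: assumes "k \<le> length xs"
  shows "\<exists>S. S \<subseteq> {..<length xs} \<and> card S = k \<and> (\<Prod>i\<in>S. xs ! i) = topk xs k"
proof -
  let ?ys = "rev (sort xs)"
  let ?n = "length xs"
  have "mset xs = mset ?ys" by simp
  from mset_eq_permutation[OF this] obtain p where p: "p permutes {..<length ?ys}"
    and pl: "permute_list p ?ys = xs" by blast
  have len: "length ?ys = ?n" by simp
  let ?S = "{i. i < ?n \<and> p i < k}"
  have xi: "xs ! i = ?ys ! p i" if "i < ?n" for i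
  proof -
    have "permute_list p ?ys ! i = ?ys ! p i" using permute_list_nth[OF p] that by auto
    thus ?thesis using pl by simp
  qed
  have inj: "inj_on p ?S" using permutes_inj[OF p] by (auto simp: inj_on_def inj_def)
  have img: "p ` ?S = {..<k}"
  proof
    show "p ` ?S \<subseteq> {..<k}" by auto
    show "{..<k} \<subseteq> p ` ?S"
    proof
      fix j assume j: "j \<in> {..<k}"
      hence "j \<in> p ` {..<?n}" using permutes_image[OF p] len assms by auto
      then obtain i where "i < ?n" "p i = j" by auto
      thus "j \<in> p ` ?S" using j by auto
    qed
  qed
  have "(\<Prod>i\<in>?S. xs ! i) = (\<Prod>i\<in>?S. ?ys ! p i)" using xi by simp
  also have "\<dots> = (\<Prod>j\<in>p ` ?S. ?ys ! j)" by (simp add: prod.reindex[OF inj])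
  also have "\<dots> = topk xs k" unfolding img topk_def ..
  finally have "(\<Prod>i\<in>?S. xs ! i) = topk xs k" .
  moreover have "card ?S = k" using card_image[OF inj] img by simp
  ultimately show ?thesis by (intro exI[of _ ?S]) auto
qed

lemma topk_mset: "mset xs = mset ys \<Longrightarrow> topk xs k = topk ys k"
proof -
  assume "mset xs = mset ys"
  hence "sort xs = sort ys" by (metis properties_for_sort mset_sort sorted_sort)
  thus ?thesis unfolding topk_def by simp
qed

lemma topk_nonneg: assumes nn: "\<And>x. x \<in> set xs \<Longrightarrow> 0 \<le> (x::real)" and "k \<le> length xs"
  shows "0 \<le> topk xs k"
  unfolding topk_def
proof (rule prod_nonneg)
  fix j assume "j \<in> {..<k}"
  hence "rev (sort xs) ! j \<in> set xs" using assms(2)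
    by (metis length_rev length_sort lessThan_iff nth_mem order_less_le_trans set_rev set_sort)
  thus "0 \<le> rev (sort xs) ! j" using nn by auto
qed

lemma prod_sigma: "(\<Prod>j=1..k. sigma j Y) = topk (map (\<lambda>e. sqrt (Re e)) (eigvals (mat_adjoint Y * Y))) k"
  unfolding topk_def sigma_def sing_vals_def
  by (simp add: prod.atLeast1_atMost_eq)

lemma const_poly_hom: "semiring_hom (\<lambda>x::'a::comm_ring_1. [:x:])"
  by unfold_locales (auto simp: one_pCons)

lemma char_poly_comm:
  fixes A B :: "'a::idom mat"
  assumes A: "A \<in> carrier_mat n n" and B: "B \<in> carrier_mat n n"
  shows "char_poly (A * B) = char_poly (B * A)"
proof -
  let ?l = "map_mat (\<lambda>x::'a. [:x:])"
  let ?t = "[:0,1:] :: 'a poly"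
  let ?T = "?t \<cdot>\<^sub>m 1\<^sub>m n"
  have lA: "?l A \<in> carrier_mat n n" and lB: "?l B \<in> carrier_mat n n" using A B by auto
  have T: "?T \<in> carrier_mat n n" by simp
  have hom: "?l (C * D) = ?l C * ?l D" if "C \<in> carrier_mat n n" "D \<in> carrier_mat n n" for C D
    using semiring_hom.mat_hom_mult[OF const_poly_hom that] .
  have cp: "char_poly (C * D) = det (?T - ?l C * ?l D)" if C: "C \<in> carrier_mat n n" and D: "D \<in> carrier_mat n n" for C D
  proof -
    have "char_poly_matrix (C * D) = ?T - ?l (C * D)"
      using C D by (intro eq_matI) (auto simp: char_poly_matrix_def)
    thus ?thesis unfolding char_poly_def hom[OF C D] by simp
  qed
  define M where "M = four_block_mat ?T (?l A) (?l B) (1\<^sub>m n)"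
  define M' where "M' = four_block_mat (1\<^sub>m n) (?l B) (?l A) ?T"
  have "det M = det (?T * 1\<^sub>m n - ?l A * ?l B)"
    unfolding M_def by (rule det_four_block_mat[OF T lA lB one_carrier_mat], insert lB, simp)
  also have "?T * 1\<^sub>m n = ?T" using T by simp
  finally have dM: "det M = char_poly (A * B)" using cp[OF A B] by simp
  have comm: "?l A * ?T = ?T * ?l A"
    using lA by (simp add: mult_smult_distrib[OF lA one_carrier_mat] mult_smult_assoc_mat[OF one_carrier_mat lA])
  have "det M' = det (1\<^sub>m n * ?T - ?l B * ?l A)"
    unfolding M'_def by (rule det_four_block_mat[OF one_carrier_mat lB lA T comm])
  also have "1\<^sub>m n * ?T = ?T" using T by simp
  finally have dM': "det M' = char_poly (B * A)" using cp[OF B A] by simp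
  have Mc: "M \<in> carrier_mat (n + n) (n + n)" unfolding M_def using lA lB by auto
  define M1 where "M1 = mat (n + n) (n + n) (\<lambda>(i,j). M $$ ((if i < n then i + n else i - n), j))"
  have M1c: "M1 \<in> carrier_mat (n + n) (n + n)" unfolding M1_def by simp
  have "det M = (-1)^(n*n) * det M1" unfolding M1_def by (rule det_swap_rows[OF Mc])
  also have "det M1 = (-1)^(n*n) * det (mat (n + n) (n + n) (\<lambda>(i,j). M1 $$ (i, (if j < n then j + n else j - n))))"
    by (rule det_swap_cols[OF M1c])
  also have "mat (n + n) (n + n) (\<lambda>(i,j). M1 $$ (i, (if j < n then j + n else j - n))) = M'"
    unfolding M1_def M'_def M_def using lA lB A B by (intro eq_matI) auto
  finally have "det M = ((-1)^(n*n) * (-1)^(n*n)) * det M'" by (simp add: ac_simps)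
  also have "(-1::'a poly)^(n*n) * (-1)^(n*n) = 1" by (simp add: power_mult_distrib[symmetric])
  finally show ?thesis using dM dM' by simp
qed

lemma det_diag: "det (mat_diag k f) = (\<Prod>j<k. f j)"
proof -
  have "det (mat_diag k f) = prod_list (diag_mat (mat_diag k f))"
    by (rule det_upper_triangular[OF _ mat_diag_dim]) (auto simp: upper_triangular_def mat_diag_def)
  also have "diag_mat (mat_diag k f) = map f [0..<k]"
    by (auto simp: diag_mat_def mat_diag_def intro!: map_cong)
  also have "prod_list (map f [0..<k]) = (\<Prod>j<k. f j)"
    by (simp add: prod.distinct_set_conv_list[symmetric] atLeast0LessThan)
  finally show ?thesis .
qed

lemma det_bound:
  fixes U Z :: "complex mat"
  assumes U: "U \<in> carrier_mat n n" and UU: "mat_adjoint U * U = 1\<^sub>m n"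
    and H: "H = U * mat_diag n (\<lambda>i. complex_of_real (lam i)) * mat_adjoint U"
    and nn: "\<And>i. i < n \<Longrightarrow> lam i \<ge> 0"
    and Z: "Z \<in> carrier_mat n k"
  shows "\<exists>a b. det (mat_adjoint Z * H * Z) = complex_of_real a \<and> det (mat_adjoint Z * Z) = complex_of_real b
     \<and> 0 \<le> b \<and> a \<le> topk (map lam [0..<n]) k * b"
proof -
  let ?L = "mat_diag n (\<lambda>i. complex_of_real (lam i))"
  have aU: "mat_adjoint U \<in> carrier_mat n n" using U by simp
  have UU': "U * mat_adjoint U = 1\<^sub>m n" using mat_mult_left_right_inverse[OF aU U UU] .
  define Y where "Y = mat_adjoint U * Z"
  have Y: "Y \<in> carrier_mat n k" unfolding Y_def using aU Z by (rule mult_carrier_mat)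
  have aY: "mat_adjoint Y = mat_adjoint Z * U" unfolding Y_def by (subst adj_mult[OF aU Z]) simp
  have aZ: "mat_adjoint Z \<in> carrier_mat k n" using Z by simp
  have Lc: "?L \<in> carrier_mat n n" by simp
  note asc = assoc_mult_mat[of _ n n _ n _ n] assoc_mult_mat[of _ n n _ n _ k] assoc_mult_mat[of _ n n _ k _ n] assoc_mult_mat[of _ n n _ k _ k] assoc_mult_mat[of _ n k _ n _ n] assoc_mult_mat[of _ n k _ n _ k] assoc_mult_mat[of _ n k _ k _ n] assoc_mult_mat[of _ n k _ k _ k] assoc_mult_mat[of _ k n _ n _ n] assoc_mult_mat[of _ k n _ n _ k] assoc_mult_mat[of _ k n _ k _ n] assoc_mult_mat[of _ k n _ k _ k] assoc_mult_mat[of _ k k _ n _ n] assoc_mult_mat[of _ k k _ n _ k] assoc_mult_mat[of _ k k _ k _ n] assoc_mult_mat[of _ k k _ k _ k]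
  note mc = mult_carrier_mat[of _ n n _ n] mult_carrier_mat[of _ n n _ k] mult_carrier_mat[of _ n k _ n] mult_carrier_mat[of _ n k _ k] mult_carrier_mat[of _ k n _ n] mult_carrier_mat[of _ k n _ k] mult_carrier_mat[of _ k k _ n] mult_carrier_mat[of _ k k _ k]
  have e1: "mat_adjoint Z * H * Z = (mat_adjoint Y * ?L) * Y"
  proof -
    have "(mat_adjoint Y * ?L) * Y = ((mat_adjoint Z * U) * ?L) * (mat_adjoint U * Z)" by (subst aY) (simp only: Y_def)
    also have "\<dots> = mat_adjoint Z * (U * ?L * mat_adjoint U) * Z"
      using aZ U Lc aU Z
      by (simp add: asc mc)
    finally show ?thesis unfolding H ..
  qed
  have e2: "mat_adjoint Z * Z = mat_adjoint Y * Y"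
  proof -
    have "mat_adjoint Y * Y = (mat_adjoint Z * U) * (mat_adjoint U * Z)" by (subst aY) (simp only: Y_def)
    also have "\<dots> = mat_adjoint Z * (U * mat_adjoint U) * Z"
      using aZ U aU Z
      by (simp add: asc mc)
    also have "\<dots> = mat_adjoint Z * Z" unfolding UU' by (simp add: right_mult_one_mat[OF aZ])
    finally show ?thesis ..
  qed
  let ?Sk = "{S. S \<subseteq> {0..<n} \<and> card S = k}"
  let ?c = "\<lambda>S. (cmod (det (rsub Y S)))\<^sup>2"
  let ?p = "\<lambda>S. \<Prod>i\<in>S. lam i"
  have aYc: "mat_adjoint Y \<in> carrier_mat k n" using Y by simp
  have AL: "mat_adjoint Y * ?L \<in> carrier_mat k n" using aYc Lc by (rule mult_carrier_mat)
  have csubL: "det (csub (mat_adjoint Y * ?L) S) = cnj (det (rsub Y S)) * complex_of_real (?p S)"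
    if S: "S \<in> ?Sk" for S
  proof -
    have cS: "card S = k" and fin: "finite S" using S finite_subset by auto
    have R: "rsub Y S \<in> carrier_mat k k" using rsub_carrier[of Y S] Y cS by simp
    have pk: "j < k \<Longrightarrow> pick S j < n" for j using pick_in_set[of j S] cS S by auto
    have "csub (mat_adjoint Y * ?L) S = mat_adjoint (rsub Y S) * mat_diag k (\<lambda>j. complex_of_real (lam (pick S j)))"
    proof -
      have "mat_adjoint Y * ?L = mat k n (\<lambda>(i,j). mat_adjoint Y $$ (i,j) * complex_of_real (lam j))"
        by (rule mat_diag_mult_right[OF aYc])
      moreover have "mat_adjoint (rsub Y S) * mat_diag k (\<lambda>j. complex_of_real (lam (pick S j))) =
          mat k k (\<lambda>(i,j). mat_adjoint (rsub Y S) $$ (i,j) * complex_of_real (lam (pick S j)))"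
        by (rule mat_diag_mult_right) (use R in simp)
      ultimately show ?thesis using Y R cS pk unfolding csub_def rsub_def by (intro eq_matI) auto
    qed
    hence "det (csub (mat_adjoint Y * ?L) S) = det (mat_adjoint (rsub Y S)) * det (mat_diag k (\<lambda>j. complex_of_real (lam (pick S j))))"
      using det_mult[of "mat_adjoint (rsub Y S)" k "mat_diag k (\<lambda>j. complex_of_real (lam (pick S j)))"] R by simp
    also have "det (mat_adjoint (rsub Y S)) = cnj (det (rsub Y S))" by (rule det_adj[OF R])
    also have "det (mat_diag k (\<lambda>j. complex_of_real (lam (pick S j)))) = complex_of_real (\<Prod>j<k. lam (pick S j))"
      unfolding det_diag by simp
    also have "(\<Prod>j<k. lam (pick S j)) = ?p S" using pick_prod[OF fin, of lam] cS by simp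
    finally show ?thesis .
  qed
  have csubA: "csub (mat_adjoint Y) S = mat_adjoint (rsub Y S)" if S: "S \<in> ?Sk" for S
  proof -
    have cS: "card S = k" using S by auto
    have pk: "j < k \<Longrightarrow> pick S j < n" for j using pick_in_set[of j S] cS S by auto
    show ?thesis using Y S cS pk unfolding csub_def rsub_def by (intro eq_matI) auto
  qed
  define a where "a = (\<Sum>S\<in>?Sk. ?p S * ?c S)"
  define b where "b = (\<Sum>S\<in>?Sk. ?c S)"
  have da: "det (mat_adjoint Z * H * Z) = complex_of_real a"
  proof -
    have "det (mat_adjoint Z * H * Z) = (\<Sum>S\<in>?Sk. det (csub (mat_adjoint Y * ?L) S) * det (rsub Y S))"
      unfolding e1 by (rule cauchy_binet[OF AL Y])
    also have "\<dots> = (\<Sum>S\<in>?Sk. complex_of_real (?p S * ?c S))"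
    proof (rule sum.cong[OF refl])
      fix S assume S: "S \<in> ?Sk"
      have "cnj (det (rsub Y S)) * det (rsub Y S) = complex_of_real (?c S)"
        using complex_norm_square[of "det (rsub Y S)"] by (metis mult.commute)
      thus "det (csub (mat_adjoint Y * ?L) S) * det (rsub Y S) = complex_of_real (?p S * ?c S)"
        unfolding csubL[OF S] by (simp add: ac_simps)
    qed
    also have "\<dots> = complex_of_real a" unfolding a_def by simp
    finally show ?thesis .
  qed
  have db: "det (mat_adjoint Z * Z) = complex_of_real b"
  proof -
    have "det (mat_adjoint Z * Z) = (\<Sum>S\<in>?Sk. det (csub (mat_adjoint Y) S) * det (rsub Y S))"
      unfolding e2 by (rule cauchy_binet[OF aYc Y])
    also have "\<dots> = (\<Sum>S\<in>?Sk. complex_of_real (?c S))"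
    proof (rule sum.cong[OF refl])
      fix S assume S: "S \<in> ?Sk"
      have cS: "card S = k" using S by auto
      have R: "rsub Y S \<in> carrier_mat k k" using rsub_carrier[of Y S] Y cS by simp
      show "det (csub (mat_adjoint Y) S) * det (rsub Y S) = complex_of_real (?c S)"
        unfolding csubA[OF S] det_adj[OF R] using complex_norm_square[of "det (rsub Y S)"] by (metis mult.commute)
    qed
    also have "\<dots> = complex_of_real b" unfolding b_def by simp
    finally show ?thesis .
  qed
  have b0: "0 \<le> b" unfolding b_def by (intro sum_nonneg) auto
  have "a \<le> (\<Sum>S\<in>?Sk. topk (map lam [0..<n]) k * ?c S)"
    unfolding a_def
  proof (rule sum_mono)
    fix S assume S: "S \<in> ?Sk"
    have "?p S = (\<Prod>i\<in>S. map lam [0..<n] ! i)"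
      using S by (intro prod.cong) auto
    also have "\<dots> \<le> topk (map lam [0..<n]) k"
      by (rule topk_ge) (use S nn in auto)
    finally show "?p S * ?c S \<le> topk (map lam [0..<n]) k * ?c S"
      by (intro mult_right_mono) auto
  qed
  also have "\<dots> = topk (map lam [0..<n]) k * b" unfolding b_def by (simp add: sum_distrib_left)
  finally have "a \<le> topk (map lam [0..<n]) k * b" .
  thus ?thesis using da db b0 by blast
qed

lemma trip_idx: assumes "X \<in> carrier_mat p k" "Y \<in> carrier_mat k q" "i < p" "j < q"
  shows "(X * mat_diag k g * Y) $$ (i,j) = (\<Sum>l<k. X $$ (i,l) * g l * Y $$ (l,j))"
proof -
  have "X * mat_diag k g = mat p k (\<lambda>(i,j). X $$ (i,j) * g j)" by (rule mat_diag_mult_right[OF assms(1)])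
  moreover have "mat p k (\<lambda>(i,j). X $$ (i,j) * g j) \<in> carrier_mat p k" by simp
  ultimately show ?thesis using mult_idx[of "X * mat_diag k g" p k Y q i j] assms by simp
qed

lemma det_attain:
  fixes R :: "complex mat"
  assumes R: "R \<in> carrier_mat n n" and RR: "mat_adjoint R * R = 1\<^sub>m n"
    and H: "H = R * mat_diag n (\<lambda>i. complex_of_real (gam i)) * mat_adjoint R"
    and S: "S \<subseteq> {0..<n}" "card S = k"
  shows "\<exists>V. V \<in> carrier_mat n k \<and> mat_adjoint V * V = 1\<^sub>m k \<and>
           det (mat_adjoint V * H * V) = complex_of_real (\<Prod>i\<in>S. gam i)"
proof -
  note asc = assoc_mult_mat[of _ n n _ n _ n] assoc_mult_mat[of _ n n _ n _ k] assoc_mult_mat[of _ n n _ k _ n] assoc_mult_mat[of _ n n _ k _ k] assoc_mult_mat[of _ n k _ n _ n] assoc_mult_mat[of _ n k _ n _ k] assoc_mult_mat[of _ n k _ k _ n] assoc_mult_mat[of _ n k _ k _ k] assoc_mult_mat[of _ k n _ n _ n] assoc_mult_mat[of _ k n _ n _ k] assoc_mult_mat[of _ k n _ k _ n] assoc_mult_mat[of _ k n _ k _ k] assoc_mult_mat[of _ k k _ n _ n] assoc_mult_mat[of _ k k _ n _ k] assoc_mult_mat[of _ k k _ k _ n] assoc_mult_mat[of _ k k _ k _ k]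
  note mc = mult_carrier_mat[of _ n n _ n] mult_carrier_mat[of _ n n _ k] mult_carrier_mat[of _ n k _ n] mult_carrier_mat[of _ n k _ k] mult_carrier_mat[of _ k n _ n] mult_carrier_mat[of _ k n _ k] mult_carrier_mat[of _ k k _ n] mult_carrier_mat[of _ k k _ k]
  let ?L = "mat_diag n (\<lambda>i. complex_of_real (gam i))"
  have fin: "finite S" using S finite_subset by blast
  have pk: "j < k \<Longrightarrow> pick S j < n" for j using pick_in_set[of j S] S by auto
  have pinj: "i < k \<Longrightarrow> j < k \<Longrightarrow> pick S i = pick S j \<longleftrightarrow> i = j" for i j
    using pick_mono[of i S j] pick_mono[of j S i] S by (metis less_irrefl linorder_neqE_nat)
  define E where "E = mat n k (\<lambda>(l,j). if l = pick S j then 1 else (0::complex))"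
  have Ec: "E \<in> carrier_mat n k" unfolding E_def by simp
  have aE: "mat_adjoint E \<in> carrier_mat k n" using Ec by simp
  have Lc: "?L \<in> carrier_mat n n" by simp
  have aR: "mat_adjoint R \<in> carrier_mat n n" using R by simp
  have EE: "mat_adjoint E * E = 1\<^sub>m k"
  proof (rule eq_matI)
    fix i j assume "i < dim_row (1\<^sub>m k :: complex mat)" "j < dim_col (1\<^sub>m k :: complex mat)"
    hence i: "i < k" and j: "j < k" by auto
    have "(mat_adjoint E * E) $$ (i,j) = (\<Sum>l<n. cnj (E $$ (l,i)) * E $$ (l,j))"
      using mult_idx[OF aE Ec i j] Ec i j by simp
    also have "\<dots> = (\<Sum>l<n. if l = pick S i then (if pick S i = pick S j then 1 else 0) else 0)"
      using i j unfolding E_def by (intro sum.cong) auto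
    also have "\<dots> = (if i = j then 1 else 0)" using pk[OF i] pinj[OF i j] by (simp add: sum.delta)
    finally show "(mat_adjoint E * E) $$ (i,j) = 1\<^sub>m k $$ (i,j)" using i j by simp
  qed (use aE Ec in auto)
  have ELE: "mat_adjoint E * ?L * E = mat_diag k (\<lambda>j. complex_of_real (gam (pick S j)))"
  proof (rule eq_matI)
    fix i j assume "i < dim_row (mat_diag k (\<lambda>j. complex_of_real (gam (pick S j))))"
      "j < dim_col (mat_diag k (\<lambda>j. complex_of_real (gam (pick S j))))"
    hence i: "i < k" and j: "j < k" by (auto simp: mat_diag_def)
    have "(mat_adjoint E * ?L * E) $$ (i,j) = (\<Sum>l<n. mat_adjoint E $$ (i,l) * complex_of_real (gam l) * E $$ (l,j))"
      by (rule trip_idx[OF aE Ec i j])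
    also have "\<dots> = (\<Sum>l<n. if l = pick S i then (if pick S i = pick S j then complex_of_real (gam l) else 0) else 0)"
      using i j Ec unfolding E_def by (intro sum.cong) auto
    also have "\<dots> = (if i = j then complex_of_real (gam (pick S i)) else 0)" using pk[OF i] pinj[OF i j] by (simp add: sum.delta)
    finally show "(mat_adjoint E * ?L * E) $$ (i,j) = mat_diag k (\<lambda>j. complex_of_real (gam (pick S j))) $$ (i,j)"
      using i j by (simp add: mat_diag_def)
  qed (use aE Ec in \<open>auto simp: mat_diag_def\<close>)
  define V where "V = R * E"
  have Vc: "V \<in> carrier_mat n k" unfolding V_def using R Ec by (rule mult_carrier_mat)
  have aV: "mat_adjoint V = mat_adjoint E * mat_adjoint R" unfolding V_def by (rule adj_mult[OF R Ec])
  have "mat_adjoint V * V = mat_adjoint E * (mat_adjoint R * R) * E"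
    using aE aR R Ec by (simp add: V_def adj_mult[OF R Ec] asc mc)
  also have "\<dots> = 1\<^sub>m k" unfolding RR using EE by (simp add: right_mult_one_mat[OF aE])
  finally have VV: "mat_adjoint V * V = 1\<^sub>m k" .
  have "mat_adjoint V * H * V = mat_adjoint E * (mat_adjoint R * R) * ?L * (mat_adjoint R * R) * E"
    using aE aR R Ec Lc by (simp add: V_def adj_mult[OF R Ec] H asc mc)
  also have "\<dots> = mat_adjoint E * ?L * E" unfolding RR by (simp add: right_mult_one_mat[OF aE] left_mult_one_mat[OF Ec] right_mult_one_mat[OF Lc] right_mult_one_mat[OF mult_carrier_mat[OF aE Lc]])
  finally have "det (mat_adjoint V * H * V) = det (mat_diag k (\<lambda>j. complex_of_real (gam (pick S j))))" unfolding ELE by simp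
  also have "\<dots> = complex_of_real (\<Prod>j<k. gam (pick S j))" unfolding det_diag by simp
  also have "(\<Prod>j<k. gam (pick S j)) = (\<Prod>i\<in>S. gam i)" using pick_prod[OF fin, of gam] S by simp
  finally show ?thesis using Vc VV by blast
qed

lemma psd_nonneg:
  fixes Y U :: "complex mat"
  assumes Y: "Y \<in> carrier_mat n n" and U: "U \<in> carrier_mat n n" and UU: "mat_adjoint U * U = 1\<^sub>m n"
    and H: "mat_adjoint Y * Y = U * mat_diag n (\<lambda>i. complex_of_real (lam i)) * mat_adjoint U"
    and i: "i < n"
  shows "lam i \<ge> 0"
proof -
  note asc = assoc_mult_mat[of _ n n _ n _ n] assoc_mult_mat[of _ n n _ n _ k] assoc_mult_mat[of _ n n _ k _ n] assoc_mult_mat[of _ n n _ k _ k] assoc_mult_mat[of _ n k _ n _ n] assoc_mult_mat[of _ n k _ n _ k] assoc_mult_mat[of _ n k _ k _ n] assoc_mult_mat[of _ n k _ k _ k] assoc_mult_mat[of _ k n _ n _ n] assoc_mult_mat[of _ k n _ n _ k] assoc_mult_mat[of _ k n _ k _ n] assoc_mult_mat[of _ k n _ k _ k] assoc_mult_mat[of _ k k _ n _ n] assoc_mult_mat[of _ k k _ n _ k] assoc_mult_mat[of _ k k _ k _ n] assoc_mult_mat[of _ k k _ k _ k]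
  note mc = mult_carrier_mat[of _ n n _ n] mult_carrier_mat[of _ n n _ k] mult_carrier_mat[of _ n k _ n] mult_carrier_mat[of _ n k _ k] mult_carrier_mat[of _ k n _ n] mult_carrier_mat[of _ k n _ k] mult_carrier_mat[of _ k k _ n] mult_carrier_mat[of _ k k _ k]
  let ?L = "mat_diag n (\<lambda>i. complex_of_real (lam i))"
  have aU: "mat_adjoint U \<in> carrier_mat n n" using U by simp
  have aY: "mat_adjoint Y \<in> carrier_mat n n" using Y by simp
  have Lc: "?L \<in> carrier_mat n n" by simp
  define W where "W = Y * U"
  have Wc: "W \<in> carrier_mat n n" unfolding W_def using Y U by (rule mult_carrier_mat)
  have "mat_adjoint W * W = mat_adjoint U * (mat_adjoint Y * Y) * U"
    unfolding W_def adj_mult[OF Y U] using aU aY Y U by (simp add: asc mc)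
  also have "\<dots> = (mat_adjoint U * U) * ?L * (mat_adjoint U * U)"
    unfolding H using aU U Lc by (simp add: asc mc)
  also have "\<dots> = ?L" unfolding UU by (simp add: left_mult_one_mat[OF Lc] right_mult_one_mat[OF Lc])
  finally have WW: "mat_adjoint W * W = ?L" .
  have "complex_of_real (lam i) = (mat_adjoint W * W) $$ (i,i)" unfolding WW using i by (simp add: mat_diag_def)
  also have "\<dots> = (\<Sum>l<n. cnj (W $$ (l,i)) * W $$ (l,i))"
    using mult_idx[OF adj_carrier[OF Wc] Wc i i] Wc i by simp
  also have "\<dots> = (\<Sum>l<n. complex_of_real ((cmod (W $$ (l,i)))\<^sup>2))"
    by (intro sum.cong refl) (metis complex_norm_square mult.commute)
  also have "\<dots> = complex_of_real (\<Sum>l<n. (cmod (W $$ (l,i)))\<^sup>2)" by simp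
  finally have "lam i = (\<Sum>l<n. (cmod (W $$ (l,i)))\<^sup>2)" using of_real_eq_iff by blast
  thus ?thesis by (simp add: sum_nonneg)
qed

lemma herm_gram: assumes "(Y::complex mat) \<in> carrier_mat n n"
  shows "mat_adjoint (mat_adjoint Y * Y) = mat_adjoint Y * Y"
  using adj_mult[OF adj_carrier[OF assms] assms] by simp

theorem lemma2p1:
  fixes n k :: nat and d :: "nat \<Rightarrow> complex" and X :: "complex mat"
  assumes "X \<in> carrier_mat n n"
    and "1 \<le> k" and "k \<le> n"
  shows "(\<Prod>j=1..k. sigma j (mat_adjoint X * mat_diag n d * X))
       \<le> (\<Prod>j=1..k. sigma j (mat_adjoint X * mat_diag n (\<lambda>i. complex_of_real (cmod (d i))) * X))"
proof -
  note asc = assoc_mult_mat[of _ n n _ n _ n] assoc_mult_mat[of _ n n _ n _ k] assoc_mult_mat[of _ n n _ k _ n] assoc_mult_mat[of _ n n _ k _ k] assoc_mult_mat[of _ n k _ n _ n] assoc_mult_mat[of _ n k _ n _ k] assoc_mult_mat[of _ n k _ k _ n] assoc_mult_mat[of _ n k _ k _ k] assoc_mult_mat[of _ k n _ n _ n] assoc_mult_mat[of _ k n _ n _ k] assoc_mult_mat[of _ k n _ k _ n] assoc_mult_mat[of _ k n _ k _ k] assoc_mult_mat[of _ k k _ n _ n] assoc_mult_mat[of _ k k _ n _ k] assoc_mult_mat[of _ k k _ k _ n] assoc_mult_mat[of _ k k _ k _ k]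
  note mc = mult_carrier_mat[of _ n n _ n] mult_carrier_mat[of _ n n _ k] mult_carrier_mat[of _ n k _ n] mult_carrier_mat[of _ n k _ k] mult_carrier_mat[of _ k n _ n] mult_carrier_mat[of _ k n _ k] mult_carrier_mat[of _ k k _ n] mult_carrier_mat[of _ k k _ k]
  have X: "X \<in> carrier_mat n n" and kn: "k \<le> n" using assms by auto
  define s where "s i = complex_of_real (sqrt (cmod (d i)))" for i
  define u where "u i = (if d i = 0 then 1 else d i / complex_of_real (cmod (d i)))" for i
  let ?S = "mat_diag n s"
  let ?Ud = "mat_diag n u"
  have Sc: "?S \<in> carrier_mat n n" and Udc: "?Ud \<in> carrier_mat n n" by auto
  have ss: "s i * s i = complex_of_real (cmod (d i))" for i
    unfolding s_def by (simp flip: of_real_mult)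
  have Dd: "mat_diag n d = ?S * ?Ud * ?S"
  proof -
    have "?S * ?Ud * ?S = mat_diag n (\<lambda>i. s i * u i * s i)" by simp
    also have "(\<lambda>i. s i * u i * s i) = d"
    proof
      fix i
      have "s i * u i * s i = complex_of_real (cmod (d i)) * u i" using ss[of i] by (simp add: ac_simps)
      also have "\<dots> = d i" unfolding u_def by auto
      finally show "s i * u i * s i = d i" .
    qed
    finally show ?thesis by simp
  qed
  have Da: "mat_diag n (\<lambda>i. complex_of_real (cmod (d i))) = ?S * ?S" using ss by simp
  have aS: "mat_adjoint ?S = ?S" unfolding adj_diag s_def by simp
  have UdU: "mat_adjoint ?Ud * ?Ud = 1\<^sub>m n"
  proof -
    have "cnj (u i) * u i = 1" for i
    proof -
      have "cmod (u i) = 1" unfolding u_def by (auto simp: norm_divide)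
      hence "u i * cnj (u i) = 1" using complex_norm_square[of "u i"] by simp
      thus ?thesis by (simp add: mult.commute)
    qed
    thus ?thesis by simp
  qed
  have UdU2: "mat_adjoint ?Ud * (?Ud * Y) = Y" if "Y \<in> carrier_mat n k" for Y
  proof -
    have "mat_adjoint ?Ud * (?Ud * Y) = (mat_adjoint ?Ud * ?Ud) * Y"
      by (rule assoc_mult_mat[symmetric, OF adj_carrier[OF Udc] Udc that])
    also have "\<dots> = Y" unfolding UdU by (rule left_mult_one_mat[OF that])
    finally show ?thesis .
  qed
  define B where "B = ?S * X"
  have Bc: "B \<in> carrier_mat n n" unfolding B_def using Sc X by (rule mult_carrier_mat)
  have aBc: "mat_adjoint B \<in> carrier_mat n n" using Bc by simp
  have aB: "mat_adjoint B = mat_adjoint X * ?S" unfolding B_def using adj_mult[OF Sc X] aS by simp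
  let ?P = "mat_adjoint B * B"
  let ?M = "mat_adjoint B * ?Ud * B"
  let ?G = "B * mat_adjoint B"
  have Meq: "mat_adjoint X * mat_diag n d * X = ?M"
    unfolding Dd aB unfolding B_def using X Sc Udc by (simp add: asc mc del: mat_diag_diag)
  have Peq: "mat_adjoint X * mat_diag n (\<lambda>i. complex_of_real (cmod (d i))) * X = ?P"
    unfolding Da aB unfolding B_def using X Sc by (simp add: asc mc del: mat_diag_diag)
  have Pc: "?P \<in> carrier_mat n n" using aBc Bc by (rule mult_carrier_mat)
  have Gc: "?G \<in> carrier_mat n n" using Bc aBc by (rule mult_carrier_mat)
  have Mc: "?M \<in> carrier_mat n n" using aBc Udc Bc by (simp add: mc)
  have aMc: "mat_adjoint ?M \<in> carrier_mat n n" using Mc by simp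
  have MMc: "mat_adjoint ?M * ?M \<in> carrier_mat n n" using aMc Mc by (rule mult_carrier_mat)
  have GG: "?G = mat_adjoint (mat_adjoint B) * mat_adjoint B" by simp
  obtain Q lamP where Q: "Q \<in> carrier_mat n n" and QQ: "mat_adjoint Q * Q = 1\<^sub>m n"
    and Pd: "?P = Q * mat_diag n (\<lambda>i. complex_of_real (lamP i)) * mat_adjoint Q"
    using hermitian_spectral[OF Pc herm_gram[OF Bc]] by blast
  obtain Qg lamG where Qg: "Qg \<in> carrier_mat n n" and QQg: "mat_adjoint Qg * Qg = 1\<^sub>m n"
    and Gd: "?G = Qg * mat_diag n (\<lambda>i. complex_of_real (lamG i)) * mat_adjoint Qg"
    using hermitian_spectral[OF Gc, unfolded GG, OF herm_gram[OF aBc]] unfolding GG by blast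
  obtain R gam where R: "R \<in> carrier_mat n n" and RR: "mat_adjoint R * R = 1\<^sub>m n"
    and Md: "mat_adjoint ?M * ?M = R * mat_diag n (\<lambda>i. complex_of_real (gam i)) * mat_adjoint R"
    using hermitian_spectral[OF MMc herm_gram[OF Mc]] by blast
  have lamP0: "i < n \<Longrightarrow> lamP i \<ge> 0" for i by (rule psd_nonneg[OF Bc Q QQ Pd])
  have lamG0: "i < n \<Longrightarrow> lamG i \<ge> 0" for i by (rule psd_nonneg[OF aBc Qg QQg Gd[unfolded GG]])
  have gam0: "i < n \<Longrightarrow> gam i \<ge> 0" for i by (rule psd_nonneg[OF Mc R RR Md])
  have aQ: "mat_adjoint Q \<in> carrier_mat n n" using Q by simp
  have QQ': "Q * mat_adjoint Q = 1\<^sub>m n" using mat_mult_left_right_inverse[OF aQ Q QQ] .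
  have aQg: "mat_adjoint Qg \<in> carrier_mat n n" using Qg by simp
  have QQg': "Qg * mat_adjoint Qg = 1\<^sub>m n" using mat_mult_left_right_inverse[OF aQg Qg QQg] .
  have aR: "mat_adjoint R \<in> carrier_mat n n" using R by simp
  have RR': "R * mat_adjoint R = 1\<^sub>m n" using mat_mult_left_right_inverse[OF aR R RR] .
  have eP: "mset (eigvals ?P) = mset (map (\<lambda>i. complex_of_real (lamP i)) [0..<n])"
    by (rule eigvals_diag[OF Q aQ QQ' Pd])
  have eG: "mset (eigvals ?G) = mset (map (\<lambda>i. complex_of_real (lamG i)) [0..<n])"
    by (rule eigvals_diag[OF Qg aQg QQg' Gd])
  have "char_poly ?G = char_poly ?P" by (rule char_poly_comm[OF Bc aBc])
  moreover have "dim_row ?G = dim_row ?P" using Bc by simp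
  ultimately have "eigvals ?G = eigvals ?P" unfolding eigvals_def by simp
  hence "mset (map (\<lambda>i. complex_of_real (lamG i)) [0..<n]) = mset (map (\<lambda>i. complex_of_real (lamP i)) [0..<n])"
    using eP eG by simp
  hence "image_mset Re (mset (map (\<lambda>i. complex_of_real (lamG i)) [0..<n])) = image_mset Re (mset (map (\<lambda>i. complex_of_real (lamP i)) [0..<n]))"
    by simp
  hence "mset (map lamG [0..<n]) = mset (map lamP [0..<n])" by (simp add: multiset.map_comp o_def)
  hence TG: "topk (map lamG [0..<n]) k = topk (map lamP [0..<n]) k" by (rule topk_mset)
  define T where "T = topk (map lamP [0..<n]) k"
  have T0: "0 \<le> T" unfolding T_def by (rule topk_nonneg) (use lamP0 kn in auto)
  have "mat_adjoint ?P * ?P = ?P * ?P" using herm_gram[OF Bc] by simp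
  also have "\<dots> = Q * (mat_diag n (\<lambda>i. complex_of_real (lamP i)) * (mat_adjoint Q * Q) * mat_diag n (\<lambda>i. complex_of_real (lamP i))) * mat_adjoint Q"
    unfolding Pd using Q aQ by (simp add: asc mc)
  also have "\<dots> = Q * mat_diag n (\<lambda>i. complex_of_real (lamP i * lamP i)) * mat_adjoint Q"
    unfolding QQ by (simp add: right_mult_one_mat[OF mat_diag_dim])
  finally have PPd: "mat_adjoint ?P * ?P = Q * mat_diag n (\<lambda>i. complex_of_real (lamP i * lamP i)) * mat_adjoint Q" .
  have "mset (map (\<lambda>e. sqrt (Re e)) (eigvals (mat_adjoint ?P * ?P))) =
        image_mset (\<lambda>e. sqrt (Re e)) (mset (map (\<lambda>i. complex_of_real (lamP i * lamP i)) [0..<n]))"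
    unfolding mset_map eigvals_diag[OF Q aQ QQ' PPd] ..
  also have "\<dots> = mset (map lamP [0..<n])"
  proof -
    have m: "map (\<lambda>e. sqrt (Re e)) (map (\<lambda>i. complex_of_real (lamP i * lamP i)) [0..<n]) = map lamP [0..<n]"
      unfolding map_map o_def by (rule map_cong) (use lamP0 in \<open>auto simp: real_sqrt_abs2\<close>)
    show ?thesis unfolding mset_map[symmetric] m ..
  qed
  finally have "topk (map (\<lambda>e. sqrt (Re e)) (eigvals (mat_adjoint ?P * ?P))) k = T"
    unfolding T_def by (rule topk_mset)
  hence RHS: "(\<Prod>j=1..k. sigma j ?P) = T" unfolding prod_sigma .
  let ?xs = "map (\<lambda>i. sqrt (gam i)) [0..<n]"
  have "mset (map (\<lambda>e. sqrt (Re e)) (eigvals (mat_adjoint ?M * ?M))) =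
        image_mset (\<lambda>e. sqrt (Re e)) (mset (map (\<lambda>i. complex_of_real (gam i)) [0..<n]))"
    unfolding mset_map eigvals_diag[OF R aR RR' Md] ..
  also have "\<dots> = mset ?xs" by (simp add: multiset.map_comp o_def)
  finally have "(\<Prod>j=1..k. sigma j ?M) = topk ?xs k" unfolding prod_sigma by (rule topk_mset)
  moreover obtain S where S: "S \<subseteq> {..<length ?xs}" "card S = k" "(\<Prod>i\<in>S. ?xs ! i) = topk ?xs k"
    using topk_attained[of k ?xs] kn by auto
  ultimately have LHS: "(\<Prod>j=1..k. sigma j ?M) = (\<Prod>i\<in>S. sqrt (gam i))"
    by (metis (no_types, lifting) S(1) length_map length_upt lessThan_iff minus_nat.diff_0 nth_map_upt plus_nat.add_0 prod.cong subsetD)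
  have S0: "S \<subseteq> {0..<n}" using S(1) by auto
  obtain V where V: "V \<in> carrier_mat n k" and VV: "mat_adjoint V * V = 1\<^sub>m k"
    and dV: "det (mat_adjoint V * (mat_adjoint ?M * ?M) * V) = complex_of_real (\<Prod>i\<in>S. gam i)"
    using det_attain[OF R RR Md S0 S(2)] by blast
  let ?Z = "?Ud * B * V"
  have Zc: "?Z \<in> carrier_mat n k" using Udc Bc V by (simp add: mc)
  have aM: "mat_adjoint ?M = mat_adjoint B * (mat_adjoint ?Ud * B)"
  proof -
    have "mat_adjoint ?M = mat_adjoint B * mat_adjoint (mat_adjoint B * ?Ud)"
      by (rule adj_mult[OF mult_carrier_mat[OF aBc Udc] Bc])
    also have "mat_adjoint (mat_adjoint B * ?Ud) = mat_adjoint ?Ud * B"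
      using adj_mult[OF aBc Udc] by simp
    finally show ?thesis .
  qed
  have aZ: "mat_adjoint ?Z = mat_adjoint V * (mat_adjoint B * mat_adjoint ?Ud)"
  proof -
    have "mat_adjoint ?Z = mat_adjoint V * mat_adjoint (?Ud * B)"
      by (rule adj_mult[OF mult_carrier_mat[OF Udc Bc] V])
    also have "mat_adjoint (?Ud * B) = mat_adjoint B * mat_adjoint ?Ud"
      by (rule adj_mult[OF Udc Bc])
    finally show ?thesis .
  qed
  have aV: "mat_adjoint V \<in> carrier_mat k n" using V by simp
  have aUd: "mat_adjoint ?Ud \<in> carrier_mat n n" using Udc by simp
  have e1: "mat_adjoint V * (mat_adjoint ?M * ?M) * V = mat_adjoint ?Z * ?G * ?Z"
    by (simp only: aM aZ) (use aV aBc aUd Bc Udc V in \<open>simp add: asc mc\<close>)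
  have e2: "mat_adjoint ?Z * ?Z = mat_adjoint V * ?P * V"
    by (simp only: aZ) (use aV aBc aUd Bc Udc V in \<open>simp add: asc mc UdU2 del: adj_diag\<close>)
  obtain a1 b1 where a1: "det (mat_adjoint ?Z * ?G * ?Z) = complex_of_real a1"
    and b1: "det (mat_adjoint ?Z * ?Z) = complex_of_real b1" and b10: "0 \<le> b1"
    and ab1: "a1 \<le> topk (map lamG [0..<n]) k * b1"
    using det_bound[OF Qg QQg Gd lamG0 Zc] by blast
  obtain a2 b2 where a2: "det (mat_adjoint V * ?P * V) = complex_of_real a2"
    and b2: "det (mat_adjoint V * V) = complex_of_real b2"
    and ab2: "a2 \<le> topk (map lamP [0..<n]) k * b2"
    using det_bound[OF Q QQ Pd lamP0 V] by blast
  have "b2 = 1" using b2 unfolding VV by simp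
  hence ab2': "a2 \<le> T" using ab2 unfolding T_def by simp
  have "b1 = a2" using b1 a2 unfolding e2 by simp
  hence "a1 \<le> T * a2" using ab1 TG unfolding T_def by simp
  also have "\<dots> \<le> T * T" by (rule mult_left_mono[OF ab2' T0])
  finally have a1T: "a1 \<le> T * T" .
  have "(\<Prod>i\<in>S. gam i) = a1" using dV a1 unfolding e1 by (metis of_real_eq_iff)
  hence prodT: "(\<Prod>i\<in>S. gam i) \<le> T * T" using a1T by simp
  have "((\<Prod>i\<in>S. sqrt (gam i)))\<^sup>2 = (\<Prod>i\<in>S. (sqrt (gam i))\<^sup>2)" by (rule prod_power_distrib)
  also have "\<dots> = (\<Prod>i\<in>S. gam i)" using S0 gam0 by (intro prod.cong) auto
  finally have "((\<Prod>i\<in>S. sqrt (gam i)))\<^sup>2 \<le> T\<^sup>2" using prodT by (simp add: power2_eq_square)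
  hence "(\<Prod>i\<in>S. sqrt (gam i)) \<le> T" using T0 by (rule power2_le_imp_le)
  hence "(\<Prod>j=1..k. sigma j ?M) \<le> (\<Prod>j=1..k. sigma j ?P)" unfolding LHS RHS .
  thus ?thesis unfolding Meq Peq .
qed

end
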